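(* Let $X$ be a $k$-dimensional complex with vertex set $[n]$ and complete $(k-1)$-skeleton. Fix $d>0$ and let $E=D_{k-1}(X)-dI$. Let $f\ge0$ be such that $\|E\,\delta_{k-2}e_F\|\le f\,\|\delta_{k-2}e_F\|$ for all $F\in X_{k-2}$. Then $\|Eb\|\le k f\|b\|$ for all $b\in B^{k-1}(X)$.
   Context: Standard Euclidean norms. Complexes have linearly ordered vertex sets; $X_i$ is the set of $i$-faces; $[F:G]$ is the oriented incidence number ($(-1)^j$ if $F\setminus G=\{v_j\}$, $F=\{v_0<\dots<v_i\}$; $0$ if $G\not\subseteq F$). Complete $(k-1)$-skeleton: every vertex set of size at most $k$ is a face. $(\delta_{k-2}f)(H)=\sum_{G\in X_{k-2}}[H:G]f(G)$, $B^{k-1}(X)=\operatorname{im}\delta_{k-2}$, $e_F$ is the indicator cochain of $F$. $D_{k-1}(X)$ is the diagonal $X_{k-1}\times X_{k-1}$ matrix whose entry at $F$ is $\deg(F)$, the number of $k$-faces containing $F$. *)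

theory Defs
  imports Complex_Main
begin

text \<open>Faces are finite sets of natural numbers (vertices in [n] = {1..n}, ordered by <).
  An i-face has i+1 vertices; we index face sets by cardinality:
  faces_of X m is the set of (m-1)-faces.\<close>

definition faces_of :: "nat set set \<Rightarrow> nat \<Rightarrow> nat set set" where
  "faces_of X m = {F \<in> X. card F = m}"

definition simplicial_complex :: "nat \<Rightarrow> nat \<Rightarrow> nat set set \<Rightarrow> bool" where
  "simplicial_complex n k X \<longleftrightarrow>
     X \<subseteq> Pow {1..n} \<and>
     (\<forall>F\<in>X. \<forall>G. G \<subseteq> F \<longrightarrow> G \<in> X) \<and>
     (\<forall>F\<in>X. card F \<le> k + 1) \<and>
     (\<exists>F\<in>X. card F = k + 1)"

definition complete_skeleton :: "nat \<Rightarrow> nat \<Rightarrow> nat set set \<Rightarrow> bool" where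
  "complete_skeleton n k X \<longleftrightarrow> (\<forall>F. F \<subseteq> {1..n} \<and> card F \<le> k \<longrightarrow> F \<in> X)"

text \<open>Oriented incidence number [F:G]: (-1)^j if F - G = {v_j}, where j is the position
  of v_j in the increasing enumeration of F (counting from 0); 0 otherwise.\<close>
definition incidence :: "nat set \<Rightarrow> nat set \<Rightarrow> real" where
  "incidence F G =
     (if G \<subseteq> F \<and> card (F - G) = 1
      then (-1) ^ card {u \<in> F. u < the_elem (F - G)} else 0)"

definition coboundary :: "nat set set \<Rightarrow> nat \<Rightarrow> (nat set \<Rightarrow> real) \<Rightarrow> nat set \<Rightarrow> real" where
  "coboundary X k f H = (\<Sum>G\<in>faces_of X (k - 1). incidence H G * f G)"

definition coboundaries :: "nat set set \<Rightarrow> nat \<Rightarrow> (nat set \<Rightarrow> real) set" where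
  "coboundaries X k =
     {b. \<exists>f. \<forall>H\<in>faces_of X k. b H = coboundary X k f H}"

definition indicator_cochain :: "nat set \<Rightarrow> nat set \<Rightarrow> real" where
  "indicator_cochain F = (\<lambda>G. if G = F then 1 else 0)"

definition face_deg :: "nat set set \<Rightarrow> nat \<Rightarrow> nat set \<Rightarrow> nat" where
  "face_deg X k F = card {H \<in> faces_of X (k + 1). F \<subseteq> H}"

definition E_op :: "nat set set \<Rightarrow> nat \<Rightarrow> real \<Rightarrow> (nat set \<Rightarrow> real) \<Rightarrow> nat set \<Rightarrow> real" where
  "E_op X k d b F = (real (face_deg X k F) - d) * b F"

definition cochain_norm :: "nat set set \<Rightarrow> nat \<Rightarrow> (nat set \<Rightarrow> real) \<Rightarrow> real" where
  "cochain_norm X k b = sqrt (\<Sum>F\<in>faces_of X k. (b F)\<^sup>2)"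

end

theory Submission
  imports Defs "HOL-Analysis.Convex"
begin

definition sg :: "nat set \<Rightarrow> nat \<Rightarrow> real" where
  "sg F u = (-1) ^ card {x\<in>F. x < u}"

lemma sg_sq: "sg F u * sg F u = 1"
  by (simp add: sg_def flip: power_add)

lemma sg_swap_lt:
  assumes "finite S" "a \<in> S" "b \<in> S" "a < b"
  shows "sg S a * sg (S - {a}) b = - (sg S b * sg (S - {b}) a)"
proof -
  have e1: "{x\<in>S - {a}. x < b} = {x\<in>S. x < b} - {a}" by auto
  have e2: "{x\<in>S - {b}. x < a} = {x\<in>S. x < a}" using assms by auto
  have fin: "finite {x\<in>S. x < b}" using assms by simp
  have ain: "a \<in> {x\<in>S. x < b}" using assms by simp
  then obtain B where B: "card {x\<in>S. x < b} = Suc B"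
    using fin by (metis card_gt_0_iff empty_iff gr0_implies_Suc)
  have "card {x\<in>S - {a}. x < b} = B" using e1 B ain fin by simp
  then show ?thesis unfolding sg_def using e2 B by simp
qed

lemma sg_swap:
  assumes "finite S" "a \<in> S" "b \<in> S" "a \<noteq> b"
  shows "sg S a * sg (S - {a}) b = - (sg S b * sg (S - {b}) a)"
proof (cases "a < b")
  case True then show ?thesis using sg_swap_lt assms by blast
next
  case False
  then have "b < a" using assms by simp
  from sg_swap_lt[OF assms(1,3,2) this] show ?thesis by simp
qed

lemma antisym_sum_zero:
  fixes c :: "nat \<Rightarrow> nat \<Rightarrow> real"
  assumes "finite S" "\<And>u w. u \<in> S \<Longrightarrow> w \<in> S \<Longrightarrow> u \<noteq> w \<Longrightarrow> c w u = - c u w"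
  shows "(\<Sum>u\<in>S. \<Sum>w\<in>S - {u}. c u w) = 0"
proof -
  define c' where "c' u w = (if u = w then 0 else c u w)" for u w
  have 1: "(\<Sum>u\<in>S. \<Sum>w\<in>S - {u}. c u w) = (\<Sum>u\<in>S. \<Sum>w\<in>S. c' u w)"
  proof (rule sum.cong[OF refl])
    fix u assume u: "u \<in> S"
    have "(\<Sum>w\<in>S. c' u w) = c' u u + (\<Sum>w\<in>S - {u}. c' u w)"
      using sum.remove[OF assms(1) u] by simp
    also have "\<dots> = (\<Sum>w\<in>S - {u}. c u w)" by (simp add: c'_def)
    finally show "(\<Sum>w\<in>S - {u}. c u w) = (\<Sum>w\<in>S. c' u w)" by simp
  qed
  have "(\<Sum>u\<in>S. \<Sum>w\<in>S. c' u w) = (\<Sum>w\<in>S. \<Sum>u\<in>S. c' u w)" by (rule sum.swap)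
  also have "\<dots> = (\<Sum>w\<in>S. \<Sum>u\<in>S. - c' w u)"
  proof (intro sum.cong refl)
    fix w u assume wu: "w \<in> S" "u \<in> S"
    show "c' u w = - c' w u"
    proof (cases "u = w")
      case False
      then have "c u w = - c w u" using assms(2)[OF wu] by auto
      then show ?thesis using False by (simp add: c'_def)
    qed (simp add: c'_def)
  qed
  also have "\<dots> = - (\<Sum>u\<in>S. \<Sum>w\<in>S. c' u w)" by (simp add: sum_negf)
  finally show ?thesis using 1 by simp
qed

lemma sum_faces:
  assumes "finite L" "\<And>u. u \<in> F \<Longrightarrow> F - {u} \<in> L"
    and "\<And>G. G \<in> L \<Longrightarrow> (\<And>u. u \<in> F \<Longrightarrow> G \<noteq> F - {u}) \<Longrightarrow> \<Phi> G = 0"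
  shows "(\<Sum>G\<in>L. \<Phi> G) = (\<Sum>u\<in>F. \<Phi> (F - {u}))"
proof -
  have inj: "inj_on (\<lambda>u. F - {u}) F" by (auto simp: inj_on_def)
  have "(\<Sum>G\<in>L. \<Phi> G) = (\<Sum>G\<in>(\<lambda>u. F - {u}) ` F. \<Phi> G)"
    by (rule sum.mono_neutral_right) (use assms in auto)
  also have "\<dots> = (\<Sum>u\<in>F. \<Phi> (F - {u}))" by (rule sum.reindex[OF inj, unfolded o_def])
  finally show ?thesis .
qed

lemma sum_cofaces:
  assumes "finite K" "\<And>v. v \<in> V \<Longrightarrow> insert v G \<in> K" "\<And>v. v\<in>V \<Longrightarrow> v \<notin> G"
    and "\<And>F. F \<in> K \<Longrightarrow> (\<And>v. v \<in> V \<Longrightarrow> F \<noteq> insert v G) \<Longrightarrow> \<Phi> F = 0"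
  shows "(\<Sum>F\<in>K. \<Phi> F) = (\<Sum>v\<in>V. \<Phi> (insert v G))"
proof -
  have inj: "inj_on (\<lambda>v. insert v G) V" using assms(3) by (auto simp: inj_on_def)
  have "(\<Sum>F\<in>K. \<Phi> F) = (\<Sum>F\<in>(\<lambda>v. insert v G) ` V. \<Phi> F)"
    by (rule sum.mono_neutral_right) (use assms in auto)
  also have "\<dots> = (\<Sum>v\<in>V. \<Phi> (insert v G))" by (rule sum.reindex[OF inj, unfolded o_def])
  finally show ?thesis .
qed

lemma inc_remove:
  assumes "u \<in> F"
  shows "incidence F (F - {u}) = sg F u"
proof -
  have "F - (F - {u}) = {u}" using assms by auto
  then show ?thesis unfolding incidence_def sg_def by simp
qed

lemma inc_nz:
  assumes "finite F" "incidence F G \<noteq> 0"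
  shows "\<exists>u\<in>F. G = F - {u}"
proof -
  have "G \<subseteq> F" "card (F - G) = 1" using assms(2) by (auto simp: incidence_def split: if_splits)
  then obtain u where "F - G = {u}" by (auto simp: card_Suc_eq)
  then show ?thesis using \<open>G \<subseteq> F\<close> by (intro bexI[of _ u]) auto
qed

lemma inc_sq: "incidence F G ^ 2 = (if incidence F G = 0 then 0 else 1)"
  by (auto simp: incidence_def power2_eq_square simp flip: power_add)


theorem proposition3p6:
  fixes n k :: nat and X :: "nat set set" and d f :: real
  assumes "k \<ge> 1"
    and "simplicial_complex n k X"
    and "complete_skeleton n k X"
    and "d > 0"
    and "f \<ge> 0"
    and "\<forall>F\<in>faces_of X (k - 1).
           cochain_norm X k (E_op X k d (coboundary X k (indicator_cochain F)))
             \<le> f * cochain_norm X k (coboundary X k (indicator_cochain F))"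
    and "b \<in> coboundaries X k"
  shows "cochain_norm X k (E_op X k d b) \<le> real k * f * cochain_norm X k b"
proof -
  define K where "K = faces_of X k"
  define L where "L = faces_of X (k-1)"
  have K_eq: "K = {F. F \<subseteq> {1..n} \<and> card F = k}"
    using assms(2,3) unfolding K_def faces_of_def simplicial_complex_def complete_skeleton_def
    by auto
  have L_eq: "L = {F. F \<subseteq> {1..n} \<and> card F = k - 1}"
    using assms(2,3) unfolding L_def faces_of_def simplicial_complex_def complete_skeleton_def
    by auto
  have finK: "finite K" unfolding K_eq by (rule finite_subset[of _ "Pow {1..n}"]) auto
  have finL: "finite L" unfolding L_eq by (rule finite_subset[of _ "Pow {1..n}"]) auto
  have finF: "finite F" if "F \<subseteq> {1..n}" for F using that finite_subset by blast
  have remK: "F - {u} \<in> L" if "F \<in> K" "u \<in> F" for F u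
    using that finF by (auto simp: K_eq L_eq)
  have insL: "insert v G \<in> K" if "G \<in> L" "v \<in> {1..n}" "v \<notin> G" for G v
    using that finF assms(1) by (auto simp: K_eq L_eq)
  define w where "w F = (real (face_deg X k F) - d)\<^sup>2" for F
  obtain h where hb: "\<forall>H\<in>K. b H = coboundary X k h H"
    using assms(7) unfolding coboundaries_def K_def by auto
  have bh: "b H = (\<Sum>u\<in>H. sg H u * h (H - {u}))" if H: "H \<in> K" for H
  proof -
    have fH: "finite H" using H finF by (auto simp: K_eq)
    have "b H = (\<Sum>G\<in>L. incidence H G * h G)"
      using hb H by (simp add: coboundary_def L_def)
    also have "\<dots> = (\<Sum>u\<in>H. incidence H (H - {u}) * h (H - {u}))"
    proof (rule sum_faces[OF finL])
      show "u \<in> H \<Longrightarrow> H - {u} \<in> L" for u using remK H by blast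
      show "incidence H G * h G = 0" if "G \<in> L" "\<And>u. u \<in> H \<Longrightarrow> G \<noteq> H - {u}" for G
        using inc_nz[OF fH, of G] that by auto
    qed
    also have "\<dots> = (\<Sum>u\<in>H. sg H u * h (H - {u}))" by (simp add: inc_remove)
    finally show ?thesis .
  qed
  have closed: "(\<Sum>u\<in>S. sg S u * b (S - {u})) = 0"
    if S: "S \<subseteq> {1..n}" "card S = k + 1" for S
  proof -
    have fS: "finite S" using S finF by auto
    have SK: "S - {u} \<in> K" if "u \<in> S" for u using that S fS by (auto simp: K_eq)
    have "(\<Sum>u\<in>S. sg S u * b (S - {u}))
        = (\<Sum>u\<in>S. \<Sum>w\<in>S - {u}. sg S u * sg (S - {u}) w * h (S - {u} - {w}))"
      by (intro sum.cong refl) (simp add: bh SK sum_distrib_left mult.assoc)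
    also have "\<dots> = 0"
    proof (rule antisym_sum_zero[OF fS])
      fix u w assume "u \<in> S" "w \<in> S" "u \<noteq> w"
      moreover have "S - {w} - {u} = S - {u} - {w}" by auto
      ultimately show "sg S w * sg (S - {w}) u * h (S - {w} - {u})
          = - (sg S u * sg (S - {u}) w * h (S - {u} - {w}))"
        using sg_swap[OF fS, of u w] by simp
    qed
    finally show ?thesis .
  qed
  define g where "g v G = (if v \<notin> G then sg (insert v G) v * b (insert v G) else 0)" for v G
  have cone: "b F = (\<Sum>u\<in>F. sg F u * g v (F - {u}))" if v: "v \<in> {1..n}" and F: "F \<in> K" for v F
  proof -
    have fF: "finite F" using F finF by (auto simp: K_eq)
    show ?thesis
    proof (cases "v \<in> F")
      case True
      have "(\<Sum>u\<in>F. sg F u * g v (F - {u})) = sg F v * g v (F - {v}) + (\<Sum>u\<in>F - {v}. sg F u * g v (F - {u}))"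
        using sum.remove[OF fF True] by simp
      also have "(\<Sum>u\<in>F - {v}. sg F u * g v (F - {u})) = 0"
        using True by (intro sum.neutral) (auto simp: g_def)
      also have "g v (F - {v}) = sg F v * b F"
        using True by (simp add: g_def insert_absorb)
      finally show ?thesis by (simp add: mult.assoc[symmetric] sg_sq)
    next
      case False
      define S where "S = insert v F"
      have S1: "S \<subseteq> {1..n}" "card S = k + 1" using F v False fF by (auto simp: S_def K_eq)
      have fS: "finite S" using fF by (simp add: S_def)
      have "0 = (\<Sum>u\<in>S. sg S u * b (S - {u}))" using closed[OF S1] by simp
      also have "\<dots> = sg S v * b F + (\<Sum>u\<in>F. sg S u * b (S - {u}))"
        using fF False by (simp add: S_def)
      finally have c0: "(\<Sum>u\<in>F. sg S u * b (S - {u})) = - (sg S v * b F)" by linarith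
      have tm: "sg F u * g v (F - {u}) = - sg S v * (sg S u * b (S - {u}))" if u: "u \<in> F" for u
      proof -
        have ins: "insert v (F - {u}) = S - {u}" using u False by (auto simp: S_def)
        have gv: "g v (F - {u}) = sg (S - {u}) v * b (S - {u})"
          using False ins by (simp add: g_def)
        have uv: "u \<noteq> v" using u False by auto
        have SF: "S - {v} = F" using False by (auto simp: S_def)
        have sw: "sg S u * sg (S - {u}) v = - (sg S v * sg F u)"
          using sg_swap[OF fS, of u v] u uv SF by (simp add: S_def)
        have "sg F u * sg (S - {u}) v = (sg S u * sg S u) * (sg F u * sg (S - {u}) v)"
          by (simp add: sg_sq)
        also have "\<dots> = sg S u * sg F u * (sg S u * sg (S - {u}) v)" by (simp only: mult_ac)
        also have "\<dots> = - sg S u * sg S v * (sg F u * sg F u)" by (simp add: sw algebra_simps)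
        also have "\<dots> = - sg S u * sg S v" by (simp add: sg_sq)
        finally have X: "sg F u * sg (S - {u}) v = - sg S u * sg S v" .
        have "sg F u * g v (F - {u}) = (sg F u * sg (S - {u}) v) * b (S - {u})" by (simp add: gv)
        also have "\<dots> = (- sg S u * sg S v) * b (S - {u})" by (simp only: X)
        finally show ?thesis by (simp add: algebra_simps)
      qed
      have "(\<Sum>u\<in>F. sg F u * g v (F - {u})) = (\<Sum>u\<in>F. - sg S v * (sg S u * b (S - {u})))"
        by (intro sum.cong refl) (simp add: tm)
      also have "\<dots> = - sg S v * (\<Sum>u\<in>F. sg S u * b (S - {u}))" by (simp add: sum_distrib_left)
      also have "\<dots> = b F" using c0 by (simp add: mult.assoc[symmetric] sg_sq)
      finally show ?thesis by simp
    qed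
  qed
  have incF: "(\<Sum>G\<in>L. (incidence F G)\<^sup>2 * \<psi> G) = (\<Sum>u\<in>F. \<psi> (F - {u}))" if F: "F \<in> K" for F \<psi>
  proof -
    have fF: "finite F" using F finF by (auto simp: K_eq)
    have "(\<Sum>G\<in>L. (incidence F G)\<^sup>2 * \<psi> G) = (\<Sum>u\<in>F. (incidence F (F - {u}))\<^sup>2 * \<psi> (F - {u}))"
    proof (rule sum_faces[OF finL])
      show "u \<in> F \<Longrightarrow> F - {u} \<in> L" for u using remK F by blast
      show "(incidence F G)\<^sup>2 * \<psi> G = 0" if "G \<in> L" "\<And>u. u \<in> F \<Longrightarrow> G \<noteq> F - {u}" for G
        using inc_nz[OF fF, of G] that by auto
    qed
    also have "\<dots> = (\<Sum>u\<in>F. \<psi> (F - {u}))"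
      by (intro sum.cong refl) (simp add: inc_remove power2_eq_square sg_sq)
    finally show ?thesis .
  qed
  have incG: "(\<Sum>F\<in>K. (incidence F G)\<^sup>2 * \<psi> F) = (\<Sum>v\<in>{1..n} - G. \<psi> (insert v G))"
    if G: "G \<in> L" for G \<psi>
  proof -
    have fG: "finite G" using G finF by (auto simp: L_eq)
    have "(\<Sum>F\<in>K. (incidence F G)\<^sup>2 * \<psi> F)
        = (\<Sum>v\<in>{1..n} - G. (incidence (insert v G) G)\<^sup>2 * \<psi> (insert v G))"
    proof (rule sum_cofaces[OF finK])
      fix F assume F: "F \<in> K" and nv: "\<And>v. v \<in> {1..n} - G \<Longrightarrow> F \<noteq> insert v G"
      have fF: "finite F" using F finF by (auto simp: K_eq)
      show "(incidence F G)\<^sup>2 * \<psi> F = 0"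
      proof (cases "incidence F G = 0")
        case False
        then obtain u where u: "u \<in> F" "G = F - {u}" using inc_nz[OF fF] by blast
        then have "F = insert u G" "u \<in> {1..n} - G" using F by (auto simp: K_eq)
        then show ?thesis using nv by blast
      qed simp
    qed (use insL G in auto)
    also have "\<dots> = (\<Sum>v\<in>{1..n} - G. \<psi> (insert v G))"
    proof (intro sum.cong refl)
      fix v assume "v \<in> {1..n} - G"
      then have "insert v G - {v} = G" "v \<in> insert v G" by auto
      then have "incidence (insert v G) G = sg (insert v G) v" using inc_remove by metis
      then show "(incidence (insert v G) G)\<^sup>2 * \<psi> (insert v G) = \<psi> (insert v G)"
        by (simp add: power2_eq_square sg_sq)
    qed
    finally show ?thesis .
  qed
  have hyp: "(\<Sum>F\<in>K. (incidence F G)\<^sup>2 * w F) \<le> f\<^sup>2 * real n" if G: "G \<in> L" for G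
  proof -
    have de: "coboundary X k (indicator_cochain G) F = incidence F G" for F
    proof -
      have "coboundary X k (indicator_cochain G) F = (\<Sum>G'\<in>L. if G' = G then incidence F G else 0)"
        unfolding coboundary_def L_def[symmetric] indicator_cochain_def
        by (intro sum.cong refl) auto
      then show ?thesis using G finL by simp
    qed
    have "sqrt (\<Sum>F\<in>K. (E_op X k d (coboundary X k (indicator_cochain G)) F)\<^sup>2)
        \<le> f * sqrt (\<Sum>F\<in>K. (coboundary X k (indicator_cochain G) F)\<^sup>2)"
      using assms(6) G unfolding cochain_norm_def K_def L_def by blast
    then have "sqrt (\<Sum>F\<in>K. (incidence F G)\<^sup>2 * w F) \<le> sqrt (f\<^sup>2 * (\<Sum>F\<in>K. (incidence F G)\<^sup>2))"
      using assms(5) by (simp add: de E_op_def w_def power_mult_distrib real_sqrt_mult mult.commute)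
    then have h1: "(\<Sum>F\<in>K. (incidence F G)\<^sup>2 * w F) \<le> f\<^sup>2 * (\<Sum>F\<in>K. (incidence F G)\<^sup>2)"
      by simp
    have "(\<Sum>F\<in>K. (incidence F G)\<^sup>2) = (\<Sum>F\<in>K. (incidence F G)\<^sup>2 * 1)" by simp
    also have "\<dots> = real (card ({1..n} - G))" using incG[OF G, of "\<lambda>_. 1"] by simp
    also have "\<dots> \<le> real n" using card_mono[of "{1..n}" "{1..n} - G"] by auto
    finally have Nn: "(\<Sum>F\<in>K. (incidence F G)\<^sup>2) \<le> real n" .
    have "f\<^sup>2 * (\<Sum>F\<in>K. (incidence F G)\<^sup>2) \<le> f\<^sup>2 * real n" using mult_left_mono[OF Nn, of "f\<^sup>2"] by simp
    with h1 show ?thesis by linarith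
  qed
  have est: "(\<Sum>F\<in>K. w F * (b F)\<^sup>2) \<le> real k * f\<^sup>2 * real n * (\<Sum>G\<in>L. (g v G)\<^sup>2)"
    if v: "v \<in> {1..n}" for v
  proof -
    have "(\<Sum>F\<in>K. w F * (b F)\<^sup>2) \<le> (\<Sum>F\<in>K. w F * (real k * (\<Sum>u\<in>F. (g v (F - {u}))\<^sup>2)))"
    proof (rule sum_mono)
      fix F assume F: "F \<in> K"
      have cF: "card F = k" using F by (simp add: K_eq)
      have "(b F)\<^sup>2 = (\<Sum>u\<in>F. sg F u * g v (F - {u}))\<^sup>2" using cone[OF v F] by simp
      also have "\<dots> \<le> (\<Sum>u\<in>F. (sg F u * g v (F - {u}))\<^sup>2) * card F"
        by (rule sum_squared_le_sum_of_squares)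
      also have "\<dots> = real k * (\<Sum>u\<in>F. (g v (F - {u}))\<^sup>2)"
        by (simp add: cF power_mult_distrib power2_eq_square[of "sg _ _"] sg_sq)
      finally show "w F * (b F)\<^sup>2 \<le> w F * (real k * (\<Sum>u\<in>F. (g v (F - {u}))\<^sup>2))"
        by (rule mult_left_mono) (simp_all add: w_def)
    qed
    also have "\<dots> = real k * (\<Sum>F\<in>K. \<Sum>G\<in>L. (incidence F G)\<^sup>2 * (w F * (g v G)\<^sup>2))"
    proof -
      have "(\<Sum>F\<in>K. w F * (real k * (\<Sum>u\<in>F. (g v (F - {u}))\<^sup>2)))
          = (\<Sum>F\<in>K. real k * (\<Sum>G\<in>L. (incidence F G)\<^sup>2 * (w F * (g v G)\<^sup>2)))"
      proof (intro sum.cong refl)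
        fix F assume F: "F \<in> K"
        have "(\<Sum>G\<in>L. (incidence F G)\<^sup>2 * (w F * (g v G)\<^sup>2)) = (\<Sum>u\<in>F. w F * (g v (F - {u}))\<^sup>2)"
          by (rule incF[OF F])
        then show "w F * (real k * (\<Sum>u\<in>F. (g v (F - {u}))\<^sup>2))
          = real k * (\<Sum>G\<in>L. (incidence F G)\<^sup>2 * (w F * (g v G)\<^sup>2))"
          by (simp add: sum_distrib_left mult_ac)
      qed
      then show ?thesis by (simp add: sum_distrib_left)
    qed
    also have "\<dots> = real k * (\<Sum>G\<in>L. (g v G)\<^sup>2 * (\<Sum>F\<in>K. (incidence F G)\<^sup>2 * w F))"
      by (subst sum.swap) (simp add: sum_distrib_left algebra_simps)
    also have "\<dots> \<le> real k * (\<Sum>G\<in>L. (g v G)\<^sup>2 * (f\<^sup>2 * real n))"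
      by (intro mult_left_mono sum_mono) (simp_all add: hyp)
    also have "\<dots> = real k * f\<^sup>2 * real n * (\<Sum>G\<in>L. (g v G)\<^sup>2)"
      by (simp add: sum_distrib_left sum_distrib_right algebra_simps)
    finally show ?thesis .
  qed
  have gsum: "(\<Sum>v\<in>{1..n}. \<Sum>G\<in>L. (g v G)\<^sup>2) = real k * (\<Sum>F\<in>K. (b F)\<^sup>2)"
  proof -
    have "(\<Sum>v\<in>{1..n}. \<Sum>G\<in>L. (g v G)\<^sup>2) = (\<Sum>G\<in>L. \<Sum>v\<in>{1..n}. (g v G)\<^sup>2)"
      by (rule sum.swap)
    also have "\<dots> = (\<Sum>G\<in>L. \<Sum>v\<in>{1..n} - G. (b (insert v G))\<^sup>2)"
    proof (rule sum.cong[OF refl])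
      fix G assume G: "G \<in> L"
      have "(\<Sum>v\<in>{1..n}. (g v G)\<^sup>2) = (\<Sum>v\<in>{1..n} - G. (g v G)\<^sup>2)"
        by (rule sum.mono_neutral_right) (auto simp: g_def)
      also have "\<dots> = (\<Sum>v\<in>{1..n} - G. (b (insert v G))\<^sup>2)"
        by (intro sum.cong refl) (auto simp: g_def power_mult_distrib power2_eq_square[of "sg _ _"] sg_sq)
      finally show "(\<Sum>v\<in>{1..n}. (g v G)\<^sup>2) = (\<Sum>v\<in>{1..n} - G. (b (insert v G))\<^sup>2)" .
    qed
    also have "\<dots> = (\<Sum>G\<in>L. \<Sum>F\<in>K. (incidence F G)\<^sup>2 * (b F)\<^sup>2)"
      by (rule sum.cong[OF refl]) (simp add: incG)
    also have "\<dots> = (\<Sum>F\<in>K. \<Sum>G\<in>L. (incidence F G)\<^sup>2 * (b F)\<^sup>2)" by (rule sum.swap)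
    also have "\<dots> = (\<Sum>F\<in>K. real k * (b F)\<^sup>2)"
    proof (rule sum.cong[OF refl])
      fix F assume F: "F \<in> K"
      have "(\<Sum>G\<in>L. (incidence F G)\<^sup>2 * (b F)\<^sup>2) = (\<Sum>u\<in>F. (b F)\<^sup>2)"
        using incF[OF F, of "\<lambda>_. (b F)\<^sup>2"] by simp
      also have "\<dots> = real k * (b F)\<^sup>2" using F by (simp add: K_eq)
      finally show "(\<Sum>G\<in>L. (incidence F G)\<^sup>2 * (b F)\<^sup>2) = real k * (b F)\<^sup>2" .
    qed
    also have "\<dots> = real k * (\<Sum>F\<in>K. (b F)\<^sup>2)" by (simp add: sum_distrib_left)
    finally show ?thesis .
  qed
  have key: "(\<Sum>F\<in>K. w F * (b F)\<^sup>2) \<le> (real k * f)\<^sup>2 * (\<Sum>F\<in>K. (b F)\<^sup>2)"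
  proof (cases "K = {}")
    case True then show ?thesis by simp
  next
    case False
    then obtain F where F: "F \<in> K" by blast
    have "n > 0"
    proof (rule ccontr)
      assume "\<not> n > 0"
      then have "F = {}" using F by (auto simp: K_eq)
      then show False using F assms(1) by (simp add: K_eq)
    qed
    have "real n * (\<Sum>F\<in>K. w F * (b F)\<^sup>2) = (\<Sum>v\<in>{1..n}. (\<Sum>F\<in>K. w F * (b F)\<^sup>2))" by simp
    also have "\<dots> \<le> (\<Sum>v\<in>{1..n}. real k * f\<^sup>2 * real n * (\<Sum>G\<in>L. (g v G)\<^sup>2))"
      by (rule sum_mono) (rule est, simp)
    also have "\<dots> = real k * f\<^sup>2 * real n * (real k * (\<Sum>F\<in>K. (b F)\<^sup>2))"
      using gsum by (simp add: sum_distrib_left[symmetric])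
    also have "\<dots> = real n * ((real k * f)\<^sup>2 * (\<Sum>F\<in>K. (b F)\<^sup>2))"
      by (simp add: power2_eq_square algebra_simps)
    finally show ?thesis using \<open>n > 0\<close> by simp
  qed
  have "cochain_norm X k (E_op X k d b) = sqrt (\<Sum>F\<in>K. w F * (b F)\<^sup>2)"
    unfolding cochain_norm_def K_def[symmetric] E_op_def w_def by (simp add: power_mult_distrib)
  also have "\<dots> \<le> sqrt ((real k * f)\<^sup>2 * (\<Sum>F\<in>K. (b F)\<^sup>2))" using key by simp
  also have "\<dots> = real k * f * cochain_norm X k b"
    using assms(5) by (simp add: real_sqrt_mult cochain_norm_def K_def)
  finally show ?thesis .
qed

end
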